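(* Let $G=(V,E)$ be a (possibly infinite) directed graph of bounded degree (self-loops allowed), let $N\ge2$, and let $w_i:V\to[0,\infty)$, $1\le i\le N$, be weights. Suppose that for every $A\subset V$ and every $1\le i<N$, \[ \sum_{a\in A}w_i(a)\le\sum_{b\in N^+(A)}w_{i+1}(b), \] and that $\sum_{v\in V}w_1(v)=\sum_{v\in V}w_N(v)<\infty$. Then there exists a weighting $\alpha:\mathcal{P}_N\to[0,\infty)$ such that for every $1\le i\le N$ and $v\in V$, \[ w_i(v)=\sum_{p\in\mathcal{P}_N:\,p(i)=v}\alpha(p). \]
   Context: $N^+(A)=\{v\in V:(a,v)\in E\text{ for some }a\in A\}$. A path of length $N$ is a sequence $p=(p(1),\dots,p(N))$ of vertices with $(p(i),p(i+1))\in E$ for $1\le i<N$; $\mathcal{P}_N$ is the set of all such paths. *)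

theory Defs
  imports "HOL-Analysis.Analysis"
begin

definition out_nbhd :: "('v \<times> 'v) set \<Rightarrow> 'v set \<Rightarrow> 'v set" where
  "out_nbhd E A = {v. \<exists>a\<in>A. (a, v) \<in> E}"

definition bounded_degree :: "('v \<times> 'v) set \<Rightarrow> bool" where
  "bounded_degree E \<longleftrightarrow> (\<exists>d::nat. \<forall>v.
     finite {u. (v, u) \<in> E} \<and> card {u. (v, u) \<in> E} \<le> d \<and>
     finite {u. (u, v) \<in> E} \<and> card {u. (u, v) \<in> E} \<le> d)"

text \<open>Paths of length N, as lists; the paper's p(i) is p ! (i - 1).\<close>
definition paths :: "('v \<times> 'v) set \<Rightarrow> nat \<Rightarrow> 'v list set" where
  "paths E N = {p. length p = N \<and> (\<forall>i. Suc i < N \<longrightarrow> (p ! i, p ! Suc i) \<in> E)}"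

end

theory Submission
  imports Defs
begin


lemma sum_upd_minus:
  fixes f :: "'a \<Rightarrow> real"
  assumes "finite S"
  shows "sum (f(x := f x - t)) S = sum f S - (if x \<in> S then t else 0)"
proof (cases "x \<in> S")
  case True
  have "sum (f(x := f x - t)) S = (f x - t) + sum (f(x := f x - t)) (S - {x})"
    using True assms by (simp add: sum.remove)
  also have "sum (f(x := f x - t)) (S - {x}) = sum f (S - {x})"
    by (rule sum.cong) auto
  also have "sum f S = f x + sum f (S - {x})" using True assms by (simp add: sum.remove)
  ultimately show ?thesis using True by simp
next
  case False
  have "sum (f(x := f x - t)) S = sum f S" by (rule sum.cong) (use False in auto)
  with False show ?thesis by simp
qed

lemma finite_hall:
  fixes E :: "('a \<times> 'b) set" and F :: "'a set" and \<mu> :: "'a \<Rightarrow> real" and \<nu> :: "'b \<Rightarrow> real"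
  assumes "finite E" "finite F" "E \<subseteq> F \<times> UNIV" "\<forall>a\<in>F. 0 \<le> \<mu> a" "\<forall>b. 0 \<le> \<nu> b"
    and "\<forall>S\<subseteq>F. sum \<mu> S \<le> sum \<nu> (E``S)"
  shows "\<exists>\<pi>. (\<forall>e. 0 \<le> \<pi> e) \<and> (\<forall>e. e \<notin> E \<longrightarrow> \<pi> e = 0) \<and>
             (\<forall>a\<in>F. (\<Sum>b\<in>E``{a}. \<pi> (a,b)) = \<mu> a) \<and> (\<forall>b. (\<Sum>a\<in>F. \<pi> (a,b)) \<le> \<nu> b)"
  using assms
proof (induction "card E" arbitrary: E F \<mu> \<nu> rule: less_induct)
  case less
  note IH = less.hyps
  have finE: "\<And>S. finite (E``S)" using less.prems(1) by (simp add: finite_Image)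
  show ?case
  proof (cases "\<forall>a\<in>F. \<mu> a = 0")
    case True
    then show ?thesis by (intro exI[of _ "\<lambda>_. 0"]) (auto simp: less.prems)
  next
    case False
    then obtain a where aF: "a\<in>F" and "\<mu> a \<noteq> 0" by blast
    have "0 \<le> \<mu> a" using less.prems(4) aF by blast
    with \<open>\<mu> a \<noteq> 0\<close> have mua: "0 < \<mu> a" by linarith
    have "sum \<mu> {a} \<le> sum \<nu> (E``{a})" using less.prems(6) aF by blast
    hence "E``{a} \<noteq> {}" using mua by auto
    then obtain b where ab: "(a,b) \<in> E" by auto
    define SS where "SS = {S. S \<subseteq> F \<and> a \<notin> S \<and> b \<in> E``S}"
    define g where "g S = sum \<nu> (E``S) - sum \<mu> S" for S
    define t where "t = Min (insert (\<mu> a) (insert (\<nu> b) (g ` SS)))"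
    have "SS \<subseteq> Pow F" by (auto simp: SS_def)
    then have finSS: "finite SS" using less.prems(2) by (meson finite_Pow_iff finite_subset)
    have t_le1: "t \<le> \<mu> a" unfolding t_def by (rule Min_le) (simp_all add: finSS)
    have t_le2: "t \<le> \<nu> b" unfolding t_def by (rule Min_le) (simp_all add: finSS)
    have t_le3: "t \<le> g S" if "S\<in>SS" for S unfolding t_def by (rule Min_le) (simp_all add: finSS that)
    note t_le = t_le1 t_le2 t_le3
    have gnn: "\<And>S. S\<in>SS \<Longrightarrow> 0 \<le> g S" using less.prems(6) by (auto simp: SS_def g_def)
    have t_ge: "0 \<le> t" unfolding t_def
      by (subst Min_ge_iff) (use finSS gnn mua less.prems(5) in \<open>auto\<close>)
    have t_in: "t \<in> insert (\<mu> a) (insert (\<nu> b) (g ` SS))"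
      unfolding t_def using finSS by (intro Min_in) auto
    define \<mu>' where "\<mu>' = \<mu>(a := \<mu> a - t)"
    define \<nu>' where "\<nu>' = \<nu>(b := \<nu> b - t)"
    have \<mu>'nn: "\<forall>a\<in>F. 0 \<le> \<mu>' a" using less.prems(4) t_le by (auto simp: \<mu>'_def)
    have \<nu>'nn: "\<forall>b. 0 \<le> \<nu>' b" using less.prems(5) t_le by (auto simp: \<nu>'_def)
    have s\<mu>': "\<And>S. finite S \<Longrightarrow> sum \<mu>' S = sum \<mu> S - (if a\<in>S then t else 0)"
      unfolding \<mu>'_def by (rule sum_upd_minus)
    have s\<nu>': "\<And>S. finite S \<Longrightarrow> sum \<nu>' S = sum \<nu> S - (if b\<in>S then t else 0)"
      unfolding \<nu>'_def by (rule sum_upd_minus)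
    have hall': "\<forall>S\<subseteq>F. sum \<mu>' S \<le> sum \<nu>' (E``S)"
    proof (intro allI impI)
      fix S assume S: "S \<subseteq> F"
      have fS: "finite S" using S less.prems(2) finite_subset by blast
      have H: "sum \<mu> S \<le> sum \<nu> (E``S)" using less.prems(6) S by blast
      show "sum \<mu>' S \<le> sum \<nu>' (E``S)"
      proof (cases "b \<in> E``S")
        case True
        show ?thesis
        proof (cases "a \<in> S")
          case True
          then show ?thesis using \<open>b \<in> E``S\<close> H by (simp add: s\<mu>' s\<nu>' fS finE)
        next
          case False
          then have "S \<in> SS" using S \<open>b \<in> E``S\<close> by (auto simp: SS_def)
          then have "t \<le> g S" by (rule t_le)
          then show ?thesis using False \<open>b \<in> E``S\<close> by (simp add: s\<mu>' s\<nu>' fS finE g_def)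
        qed
      next
        case False
        then show ?thesis using H t_ge by (simp add: s\<mu>' s\<nu>' fS finE)
      qed
    qed
    show ?thesis
    proof (cases "\<mu>' a = 0 \<or> \<nu>' b = 0")
      case True
      define E2 where "E2 = E - {(a,b)}"
      have card: "card E2 < card E" unfolding E2_def by (rule card_Diff1_less[OF less.prems(1) ab])
      have finE2: "\<And>S. finite (E2``S)" using less.prems(1) by (simp add: E2_def finite_Image)
      have hall2: "\<forall>S\<subseteq>F. sum \<mu>' S \<le> sum \<nu>' (E2``S)"
      proof (intro allI impI)
        fix S assume S: "S \<subseteq> F"
        have fS: "finite S" using S less.prems(2) finite_subset by blast
        from True show "sum \<mu>' S \<le> sum \<nu>' (E2``S)"
        proof
          assume z: "\<mu>' a = 0"
          have "sum \<mu>' S = sum \<mu>' (S - {a})" using z fS by (simp add: sum_diff1)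
          also have "\<dots> \<le> sum \<nu>' (E``(S-{a}))" using hall' S by (meson Diff_subset order.trans)
          also have "\<dots> \<le> sum \<nu>' (E2``S)"
            by (rule sum_mono2) (use finE2 \<nu>'nn in \<open>auto simp: E2_def\<close>)
          finally show ?thesis .
        next
          assume z: "\<nu>' b = 0"
          have "sum \<mu>' S \<le> sum \<nu>' (E``S)" using hall' S by auto
          also have "\<dots> = sum \<nu>' (E``S - {b})" using z finE by (simp add: sum_diff1)
          also have "\<dots> \<le> sum \<nu>' (E2``S)"
            by (rule sum_mono2) (use finE2 \<nu>'nn in \<open>auto simp: E2_def\<close>)
          finally show ?thesis .
        qed
      qed
      have "E2 \<subseteq> F \<times> UNIV" using less.prems(3) by (auto simp: E2_def)
      then obtain \<pi>2 where \<pi>2: "\<forall>e. 0 \<le> \<pi>2 e" "\<forall>e. e \<notin> E2 \<longrightarrow> \<pi>2 e = 0"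
          "\<forall>a\<in>F. (\<Sum>b\<in>E2``{a}. \<pi>2 (a,b)) = \<mu>' a" "\<forall>b. (\<Sum>a\<in>F. \<pi>2 (a,b)) \<le> \<nu>' b"
        using IH[OF card, of F \<mu>' \<nu>'] less.prems(1,2) \<mu>'nn \<nu>'nn hall2 by (auto simp: E2_def)
      have z2: "\<And>x y. (x,y) \<notin> E2 \<Longrightarrow> \<pi>2 (x,y) = 0" using \<pi>2(2) by blast
      define \<pi> where "\<pi> e = \<pi>2 e + (if e = (a,b) then t else 0)" for e
      show ?thesis
      proof (intro exI[of _ \<pi>] conjI allI ballI impI)
        fix e show "0 \<le> \<pi> e" using \<pi>2(1)[rule_format, of e] t_ge by (simp add: \<pi>_def)
      next
        fix e assume "e \<notin> E" then show "\<pi> e = 0" using \<pi>2(2)[rule_format, of e] ab by (auto simp: \<pi>_def E2_def)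
      next
        fix a' assume a': "a' \<in> F"
        have r1: "(\<Sum>b'\<in>E``{a'}. \<pi>2 (a',b')) = (\<Sum>b'\<in>E2``{a'}. \<pi>2 (a',b'))"
          by (rule sum.mono_neutral_right) (use finE z2 in \<open>auto simp: E2_def\<close>)
        have "(\<Sum>b'\<in>E``{a'}. \<pi> (a',b')) = (\<Sum>b'\<in>E``{a'}. \<pi>2 (a',b')) + (if a' = a then t else 0)"
          using ab finE by (simp add: \<pi>_def sum.distrib)
        then show "(\<Sum>b'\<in>E``{a'}. \<pi> (a',b')) = \<mu> a'"
          using r1 \<pi>2(3) a' by (simp add: \<mu>'_def)
      next
        fix b'
        have "(\<Sum>a'\<in>F. \<pi> (a',b')) = (\<Sum>a'\<in>F. \<pi>2 (a',b')) + (if b' = b then t else 0)"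
          using aF less.prems(2) by (simp add: \<pi>_def sum.distrib)
        then show "(\<Sum>a'\<in>F. \<pi> (a',b')) \<le> \<nu> b'"
          using \<pi>2(4)[rule_format, of b'] by (simp add: \<nu>'_def split: if_splits)
      qed
    next
      case False
      with t_in have "t \<in> g ` SS" by (auto simp: \<mu>'_def \<nu>'_def)
      then obtain S0 where S0: "S0 \<in> SS" "t = g S0" by auto
      define T where "T = E``S0"
      have S0F: "S0 \<subseteq> F" and aS0: "a \<notin> S0" and bT: "b \<in> T" using S0(1) by (auto simp: SS_def T_def)
      have fS0: "finite S0" using S0F less.prems(2) finite_subset by blast
      have tight: "sum \<mu>' S0 = sum \<nu>' T"
        using aS0 bT S0(2) fS0 finE by (simp add: s\<mu>' s\<nu>' T_def g_def)
      define E1 where "E1 = {e\<in>E. fst e \<in> S0}"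
      define E2 where "E2 = {e\<in>E. fst e \<notin> S0 \<and> snd e \<notin> T}"
      have "E1 \<subseteq> E" "(a,b) \<notin> E1" using aS0 by (auto simp: E1_def)
      then have "E1 \<subset> E" using ab by blast
      then have card1: "card E1 < card E" by (rule psubset_card_mono[OF less.prems(1)])
      obtain a0 where a0: "a0 \<in> S0" "(a0, b) \<in> E" using bT by (auto simp: T_def)
      have "E2 \<subseteq> E" "(a0,b) \<notin> E2" using a0 by (auto simp: E2_def)
      then have "E2 \<subset> E" using a0 by blast
      then have card2: "card E2 < card E" by (rule psubset_card_mono[OF less.prems(1)])
      have hall1: "\<forall>S\<subseteq>S0. sum \<mu>' S \<le> sum \<nu>' (E1``S)"
      proof (intro allI impI)
        fix S assume S: "S \<subseteq> S0"
        have "E1``S = E``S" using S unfolding E1_def Image_def by auto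
        then show "sum \<mu>' S \<le> sum \<nu>' (E1``S)" using hall' S S0F by auto
      qed
      have hall2: "\<forall>S\<subseteq>F - S0. sum \<mu>' S \<le> sum \<nu>' (E2``S)"
      proof (intro allI impI)
        fix S assume S: "S \<subseteq> F - S0"
        have fS: "finite S" using S less.prems(2) finite_subset by blast
        have e2: "E2``S = E``S - T" using S unfolding E2_def Image_def T_def by auto
        have "sum \<mu>' S + sum \<mu>' S0 = sum \<mu>' (S \<union> S0)"
          using S fS fS0 by (intro sum.union_disjoint[symmetric]) auto
        also have "\<dots> \<le> sum \<nu>' (E``(S \<union> S0))" using hall' S S0F by (metis Diff_subset Un_least order.trans)
        also have "E``(S \<union> S0) = (E``S - T) \<union> T" by (auto simp: T_def)
        also have "sum \<nu>' \<dots> = sum \<nu>' (E``S - T) + sum \<nu>' T"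
          using finE by (intro sum.union_disjoint) (auto simp: T_def)
        finally show "sum \<mu>' S \<le> sum \<nu>' (E2``S)" using tight e2 by simp
      qed
      have p1: "finite E1" "E1 \<subseteq> S0 \<times> UNIV" "\<forall>a\<in>S0. 0 \<le> \<mu>' a"
        using less.prems(1) \<mu>'nn S0F by (auto simp: E1_def)
      obtain \<pi>1 where \<pi>1: "\<forall>e. 0 \<le> \<pi>1 e" "\<forall>e. e \<notin> E1 \<longrightarrow> \<pi>1 e = 0"
          "\<forall>a\<in>S0. (\<Sum>b\<in>E1``{a}. \<pi>1 (a,b)) = \<mu>' a" "\<forall>b. (\<Sum>a\<in>S0. \<pi>1 (a,b)) \<le> \<nu>' b"
        using IH[OF card1 p1(1) fS0 p1(2) p1(3) \<nu>'nn hall1] by blast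
      have p2: "finite E2" "finite (F - S0)" "E2 \<subseteq> (F - S0) \<times> UNIV" "\<forall>a\<in>F - S0. 0 \<le> \<mu>' a"
        using less.prems(1,2,3) \<mu>'nn by (auto simp: E2_def)
      obtain \<pi>2 where \<pi>2: "\<forall>e. 0 \<le> \<pi>2 e" "\<forall>e. e \<notin> E2 \<longrightarrow> \<pi>2 e = 0"
          "\<forall>a\<in>F-S0. (\<Sum>b\<in>E2``{a}. \<pi>2 (a,b)) = \<mu>' a" "\<forall>b. (\<Sum>a\<in>F-S0. \<pi>2 (a,b)) \<le> \<nu>' b"
        using IH[OF card2 p2(1) p2(2) p2(3) p2(4) \<nu>'nn hall2] by blast
      have z1: "\<And>x y. (x,y) \<notin> E1 \<Longrightarrow> \<pi>1 (x,y) = 0" using \<pi>1(2) by blast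
      have z2: "\<And>x y. (x,y) \<notin> E2 \<Longrightarrow> \<pi>2 (x,y) = 0" using \<pi>2(2) by blast
      define \<pi> where "\<pi> e = \<pi>1 e + \<pi>2 e + (if e = (a,b) then t else 0)" for e
      show ?thesis
      proof (intro exI[of _ \<pi>] conjI allI ballI impI)
        fix e show "0 \<le> \<pi> e" using \<pi>1(1)[rule_format, of e] \<pi>2(1)[rule_format, of e] t_ge by (simp add: \<pi>_def)
      next
        fix e assume "e \<notin> E" then show "\<pi> e = 0" using \<pi>1(2)[rule_format, of e] \<pi>2(2)[rule_format, of e] ab
          by (auto simp: \<pi>_def E1_def E2_def)
      next
        fix a' assume a': "a' \<in> F"
        have split: "(\<Sum>b'\<in>E``{a'}. \<pi> (a',b')) = (\<Sum>b'\<in>E``{a'}. \<pi>1 (a',b'))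
             + (\<Sum>b'\<in>E``{a'}. \<pi>2 (a',b')) + (if a' = a then t else 0)"
          using ab finE by (simp add: \<pi>_def sum.distrib)
        show "(\<Sum>b'\<in>E``{a'}. \<pi> (a',b')) = \<mu> a'"
        proof (cases "a' \<in> S0")
          case True
          have "E1``{a'} = E``{a'}" using True unfolding E1_def Image_def by auto
          moreover have "(\<Sum>b'\<in>E``{a'}. \<pi>2 (a',b')) = 0"
            using True z2 by (auto simp: E2_def intro!: sum.neutral)
          ultimately show ?thesis using split \<pi>1(3) True aS0 by (auto simp: \<mu>'_def)
        next
          case False
          have "(\<Sum>b'\<in>E``{a'}. \<pi>1 (a',b')) = 0"
            using False z1 by (auto simp: E1_def intro!: sum.neutral)
          moreover have "(\<Sum>b'\<in>E``{a'}. \<pi>2 (a',b')) = (\<Sum>b'\<in>E2``{a'}. \<pi>2 (a',b'))"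
            by (rule sum.mono_neutral_right) (use finE z2 in \<open>auto simp: E2_def\<close>)
          ultimately show ?thesis using split \<pi>2(3) False a' by (auto simp: \<mu>'_def)
        qed
      next
        fix b'
        have split: "(\<Sum>a'\<in>F. \<pi> (a',b')) = (\<Sum>a'\<in>F. \<pi>1 (a',b')) + (\<Sum>a'\<in>F. \<pi>2 (a',b'))
             + (if b' = b then t else 0)"
          using aF less.prems(2) by (simp add: \<pi>_def sum.distrib)
        have c1: "(\<Sum>a'\<in>F. \<pi>1 (a',b')) = (\<Sum>a'\<in>S0. \<pi>1 (a',b'))"
          by (rule sum.mono_neutral_right) (use less.prems(2) S0F z1 in \<open>auto simp: E1_def\<close>)
        have c2: "(\<Sum>a'\<in>F. \<pi>2 (a',b')) = (\<Sum>a'\<in>F-S0. \<pi>2 (a',b'))"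
          by (rule sum.mono_neutral_right) (use less.prems(2) z2 in \<open>auto simp: E2_def\<close>)
        have "(\<Sum>a'\<in>F. \<pi>1 (a',b')) + (\<Sum>a'\<in>F. \<pi>2 (a',b')) \<le> \<nu>' b'"
        proof (cases "b' \<in> T")
          case True
          have "(\<Sum>a'\<in>F. \<pi>2 (a',b')) = 0"
            using True z2 by (auto simp: E2_def intro!: sum.neutral)
          then show ?thesis using c1 \<pi>1(4) by simp
        next
          case False
          have "(\<Sum>a'\<in>F. \<pi>1 (a',b')) = 0"
            using False z1 by (auto simp: E1_def T_def intro!: sum.neutral)
          then show ?thesis using c2 \<pi>2(4) by simp
        qed
        then show "(\<Sum>a'\<in>F. \<pi> (a',b')) \<le> \<nu> b'"
          using split by (simp add: \<nu>'_def split: if_splits)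
      qed
    qed
  qed
qed



lemma summable_ennreal_any[simp]: "(f :: 'a \<Rightarrow> ennreal) summable_on S"
  by (rule nonneg_summable_on_complete) simp

lemma coupling:
  fixes E :: "('v \<times> 'v) set" and \<mu> \<nu> :: "'v \<Rightarrow> real"
  assumes fo: "\<And>a. finite {b. (a,b) \<in> E}" and fi: "\<And>b. finite {a. (a,b) \<in> E}"
    and \<mu>nn: "\<forall>a. 0 \<le> \<mu> a" and \<nu>nn: "\<forall>b. 0 \<le> \<nu> b"
    and hall: "\<forall>A. (\<Sum>\<^sub>\<infinity>a\<in>A. ennreal (\<mu> a)) \<le> (\<Sum>\<^sub>\<infinity>b\<in>out_nbhd E A. ennreal (\<nu> b))"
    and tot: "(\<Sum>\<^sub>\<infinity>a\<in>UNIV. ennreal (\<mu> a)) = (\<Sum>\<^sub>\<infinity>b\<in>UNIV. ennreal (\<nu> b))"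
    and fin: "(\<Sum>\<^sub>\<infinity>a\<in>UNIV. ennreal (\<mu> a)) < \<infinity>"
  shows "\<exists>\<pi>. (\<forall>e. 0 \<le> \<pi> e) \<and> (\<forall>e. e \<notin> E \<longrightarrow> \<pi> e = 0) \<and>
     (\<forall>a. (\<Sum>b\<in>{b. (a,b) \<in> E}. \<pi> (a,b)) = \<mu> a) \<and> (\<forall>b. (\<Sum>a\<in>{a. (a,b) \<in> E}. \<pi> (a,b)) = \<nu> b)"
proof -
  define row where "row \<pi> a = (\<Sum>b\<in>{b. (a,b) \<in> E}. \<pi> (a,b))" for \<pi> :: "'v \<times> 'v \<Rightarrow> real" and a
  define col where "col \<pi> b = (\<Sum>a\<in>{a. (a,b) \<in> E}. \<pi> (a,b))" for \<pi> :: "'v \<times> 'v \<Rightarrow> real" and b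
  have outfin: "finite (out_nbhd E S)" if "finite S" for S
  proof -
    have "out_nbhd E S = (\<Union>a\<in>S. {b. (a,b) \<in> E})" by (auto simp: out_nbhd_def)
    then show ?thesis using that fo by simp
  qed
  have step1: "\<exists>\<pi>. (\<forall>e. 0 \<le> \<pi> e \<and> \<pi> e \<le> \<mu> (fst e)) \<and> (\<forall>e. e \<notin> E \<longrightarrow> \<pi> e = 0) \<and>
       (\<forall>a\<in>F. row \<pi> a = \<mu> a) \<and> (\<forall>b. col \<pi> b \<le> \<nu> b)" if finF: "finite F" for F
  proof -
    define E' where "E' = (SIGMA a:F. {b. (a,b) \<in> E})"
    have finE': "finite E'" unfolding E'_def using finF fo by (intro finite_SigmaI) auto
    have E'sub: "E' \<subseteq> F \<times> UNIV" by (auto simp: E'_def)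
    have hallF: "\<forall>S\<subseteq>F. sum \<mu> S \<le> sum \<nu> (E'``S)"
    proof (intro allI impI)
      fix S assume S: "S \<subseteq> F"
      have fS: "finite S" using S finF finite_subset by blast
      have img: "E'``S = out_nbhd E S" using S by (auto simp: E'_def out_nbhd_def)
      have "(\<Sum>\<^sub>\<infinity>a\<in>S. ennreal (\<mu> a)) \<le> (\<Sum>\<^sub>\<infinity>b\<in>out_nbhd E S. ennreal (\<nu> b))"
        using hall by blast
      then have "ennreal (sum \<mu> S) \<le> ennreal (sum \<nu> (out_nbhd E S))"
        using fS outfin[OF fS] \<mu>nn \<nu>nn by simp
      then show "sum \<mu> S \<le> sum \<nu> (E'``S)" using img \<nu>nn
        by (simp add: sum_nonneg)
    qed
    obtain \<pi> where \<pi>: "\<forall>e. 0 \<le> \<pi> e" "\<forall>e. e \<notin> E' \<longrightarrow> \<pi> e = 0"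
        "\<forall>a\<in>F. (\<Sum>b\<in>E'``{a}. \<pi> (a,b)) = \<mu> a" "\<forall>b. (\<Sum>a\<in>F. \<pi> (a,b)) \<le> \<nu> b"
      using finite_hall[OF finE' finF E'sub _ \<nu>nn hallF] \<mu>nn by blast
    have z: "\<And>x y. (x,y) \<notin> E' \<Longrightarrow> \<pi> (x,y) = 0" using \<pi>(2) by blast
    have nn: "\<And>x y. 0 \<le> \<pi> (x,y)" using \<pi>(1) by blast
    have rowF: "row \<pi> a = \<mu> a" if "a \<in> F" for a
    proof -
      have eq: "E'``{a} = {b. (a,b) \<in> E}" using that by (auto simp: E'_def)
      from \<pi>(3) that have "(\<Sum>b\<in>E'``{a}. \<pi> (a,b)) = \<mu> a" by blast
      then show ?thesis by (simp only: row_def eq)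
    qed
    show ?thesis
    proof (intro exI[of _ \<pi>] conjI allI ballI impI)
      fix e :: "'v \<times> 'v"
      obtain x y where e: "e = (x,y)" by (cases e)
      show "0 \<le> \<pi> e" using nn e by simp
      show "\<pi> e \<le> \<mu> (fst e)"
      proof (cases "e \<in> E'")
        case False then show ?thesis using z e \<mu>nn by simp
      next
        case True
        then have xF: "x \<in> F" and xy: "(x,y) \<in> E" using e by (auto simp: E'_def)
        have "\<pi> (x,y) \<le> row \<pi> x" unfolding row_def
          by (rule member_le_sum) (use xy fo nn in auto)
        then show ?thesis using rowF[OF xF] e by simp
      qed
    next
      fix e assume "e \<notin> E" then show "\<pi> e = 0" using \<pi>(2)[rule_format, of e] by (auto simp: E'_def)
    next
      fix a assume "a \<in> F" then show "row \<pi> a = \<mu> a" by (rule rowF)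
    next
      fix b
      have "col \<pi> b = (\<Sum>a\<in>{a\<in>F. (a,b) \<in> E}. \<pi> (a,b))" unfolding col_def
        by (rule sum.mono_neutral_right) (use fi z in \<open>auto simp: E'_def\<close>)
      also have "\<dots> = (\<Sum>a\<in>F. \<pi> (a,b))"
        by (rule sum.mono_neutral_left) (use finF z in \<open>auto simp: E'_def\<close>)
      finally show "col \<pi> b \<le> \<nu> b" using \<pi>(4) by simp
    qed
  qed
  define K where "K = (Pi\<^sub>E UNIV (\<lambda>e. {0..\<mu> (fst e)}) :: ('v \<times> 'v \<Rightarrow> real) set)"
  have "compactin (product_topology (\<lambda>_. euclidean) UNIV) K"
    unfolding K_def by (simp add: compactin_PiE)
  then have compK: "compact K" by (simp add: euclidean_product_topology)
  define R where "R a = {\<pi>. row \<pi> a = \<mu> a}" for a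
  define C where "C b = {\<pi>. col \<pi> b \<le> \<nu> b}" for b
  define Z where "Z e = {\<pi> :: 'v \<times> 'v \<Rightarrow> real. \<pi> e = 0}" for e
  define FF where "FF = range R \<union> range C \<union> Z ` (- E)"
  have cont_row: "continuous_on UNIV (\<lambda>\<pi>. row \<pi> a)" for a
    unfolding row_def by (intro continuous_intros continuous_on_product_coordinates)
  have cont_col: "continuous_on UNIV (\<lambda>\<pi>. col \<pi> b)" for b
    unfolding col_def by (intro continuous_intros continuous_on_product_coordinates)
  have closedFF: "closed T" if "T \<in> FF" for T
  proof -
    have "closed (R a)" for a unfolding R_def
      by (rule closed_Collect_eq) (use cont_row in \<open>auto intro: continuous_intros\<close>)
    moreover have "closed (C b)" for b unfolding C_def
      by (rule closed_Collect_le) (use cont_col in \<open>auto intro: continuous_intros\<close>)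
    moreover have "closed (Z e)" for e unfolding Z_def
      by (rule closed_Collect_eq) (auto intro: continuous_intros continuous_on_product_coordinates)
    ultimately show ?thesis using that by (auto simp: FF_def)
  qed
  have "K \<inter> \<Inter>FF \<noteq> {}"
  proof (rule compact_imp_fip[OF compK closedFF])
    fix F' assume fF': "finite F'" and sF': "F' \<subseteq> FF"
    have "F' \<inter> range R \<subseteq> R ` UNIV" by blast
    moreover have "finite (F' \<inter> range R)" using fF' by simp
    ultimately obtain A0 where A0: "finite A0" "F' \<inter> range R = R ` A0"
      using finite_subset_image by (metis subset_UNIV)
    obtain \<pi> where \<pi>: "\<forall>e. 0 \<le> \<pi> e \<and> \<pi> e \<le> \<mu> (fst e)" "\<forall>e. e \<notin> E \<longrightarrow> \<pi> e = 0"
       "\<forall>a\<in>A0. row \<pi> a = \<mu> a" "\<forall>b. col \<pi> b \<le> \<nu> b"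
      using step1[OF A0(1)] by blast
    have "\<pi> \<in> K" using \<pi>(1) by (simp add: K_def PiE_iff)
    moreover have "\<pi> \<in> T" if "T \<in> F'" for T
    proof -
      have "T \<in> FF" using that sF' by blast
      then consider a where "T = R a" | b where "T = C b" | e where "e \<notin> E" "T = Z e"
        unfolding FF_def by blast
      then show ?thesis
      proof cases
        case (1 a)
        then have "T \<in> R ` A0" using A0(2) that by blast
        then show ?thesis using \<pi>(3) by (auto simp: R_def)
      next
        case (2 b) then show ?thesis using \<pi>(4) by (simp add: C_def)
      next
        case (3 e) then show ?thesis using \<pi>(2)[rule_format, of e] by (simp add: Z_def)
      qed
    qed
    ultimately show "K \<inter> \<Inter>F' \<noteq> {}" by blast
  qed
  then obtain \<pi> where \<pi>K: "\<pi> \<in> K" and \<pi>FF: "\<pi> \<in> \<Inter>FF" by blast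
  have nn: "\<And>e. 0 \<le> \<pi> e" using \<pi>K by (auto simp: K_def PiE_iff)
  have zE: "\<And>e. e \<notin> E \<Longrightarrow> \<pi> e = 0" using \<pi>FF by (auto simp: FF_def Z_def)
  have rowall: "\<And>a. row \<pi> a = \<mu> a" using \<pi>FF by (auto simp: FF_def R_def)
  have colle: "\<And>b. col \<pi> b \<le> \<nu> b" using \<pi>FF by (auto simp: FF_def C_def)
  have colnn: "\<And>b. 0 \<le> col \<pi> b" unfolding col_def by (intro sum_nonneg) (use nn in auto)
  have fin_le: "ennreal (sum \<mu> A0) \<le> (\<Sum>\<^sub>\<infinity>b\<in>UNIV. ennreal (col \<pi> b))" if "finite A0" for A0
  proof -
    define B0 where "B0 = out_nbhd E A0"
    have fB0: "finite B0" using outfin[OF that] by (simp add: B0_def)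
    have "sum \<mu> A0 = (\<Sum>a\<in>A0. \<Sum>b\<in>{b. b \<in> B0 \<and> (a,b) \<in> E}. \<pi> (a,b))"
    proof (rule sum.cong)
      fix a assume "a \<in> A0"
      then have "{b. b \<in> B0 \<and> (a,b) \<in> E} = {b. (a,b) \<in> E}" by (auto simp: B0_def out_nbhd_def)
      then show "\<mu> a = (\<Sum>b\<in>{b. b \<in> B0 \<and> (a,b) \<in> E}. \<pi> (a,b))" using rowall[of a] by (simp add: row_def)
    qed simp
    also have "\<dots> = (\<Sum>b\<in>B0. \<Sum>a\<in>{a. a \<in> A0 \<and> (a,b) \<in> E}. \<pi> (a,b))"
      by (rule sum.swap_restrict[OF that fB0])
    also have "\<dots> \<le> (\<Sum>b\<in>B0. col \<pi> b)"
    proof (rule sum_mono)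
      fix b assume "b \<in> B0"
      show "(\<Sum>a\<in>{a. a \<in> A0 \<and> (a,b) \<in> E}. \<pi> (a,b)) \<le> col \<pi> b" unfolding col_def
        by (rule sum_mono2) (use fi nn in auto)
    qed
    finally have "ennreal (sum \<mu> A0) \<le> ennreal (\<Sum>b\<in>B0. col \<pi> b)"
      using colnn by (simp add: sum_nonneg)
    also have "\<dots> = (\<Sum>b\<in>B0. ennreal (col \<pi> b))" using colnn by simp
    also have "\<dots> = (\<Sum>\<^sub>\<infinity>b\<in>B0. ennreal (col \<pi> b))" using fB0 by simp
    also have "\<dots> \<le> (\<Sum>\<^sub>\<infinity>b\<in>UNIV. ennreal (col \<pi> b))"
      by (rule infsum_mono_neutral) auto
    finally show ?thesis .
  qed
  have tot1: "(\<Sum>\<^sub>\<infinity>a\<in>UNIV. ennreal (\<mu> a)) \<le> (\<Sum>\<^sub>\<infinity>b\<in>UNIV. ennreal (col \<pi> b))"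
  proof (rule infsum_le_finite_sums)
    show "(\<lambda>a. ennreal (\<mu> a)) summable_on UNIV" by simp
    fix A0 :: "'v set" assume "finite A0"
    then show "(\<Sum>a\<in>A0. ennreal (\<mu> a)) \<le> (\<Sum>\<^sub>\<infinity>b\<in>UNIV. ennreal (col \<pi> b))"
      using fin_le \<mu>nn by simp
  qed
  have tot2: "(\<Sum>\<^sub>\<infinity>b\<in>UNIV. ennreal (col \<pi> b)) \<le> (\<Sum>\<^sub>\<infinity>b\<in>UNIV. ennreal (\<nu> b))"
    by (rule infsum_mono) (use colle \<nu>nn in auto)
  have colfin: "(\<Sum>\<^sub>\<infinity>b\<in>UNIV. ennreal (col \<pi> b)) = (\<Sum>\<^sub>\<infinity>b\<in>UNIV. ennreal (\<nu> b))"
    using tot1 tot2 tot by simp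
  have coleq: "col \<pi> b = \<nu> b" for b
  proof -
    have split: "(\<Sum>\<^sub>\<infinity>x\<in>UNIV. f x) = (\<Sum>\<^sub>\<infinity>x\<in>UNIV - {b}. f x) + f b" for f :: "'v \<Rightarrow> ennreal"
    proof -
      have "(\<Sum>\<^sub>\<infinity>x\<in>(UNIV - {b}) \<union> {b}. f x) = (\<Sum>\<^sub>\<infinity>x\<in>UNIV - {b}. f x) + (\<Sum>\<^sub>\<infinity>x\<in>{b}. f x)"
        by (rule infsum_Un_disjoint) auto
      moreover have "(UNIV - {b}) \<union> {b} = UNIV" by blast
      ultimately show ?thesis by simp
    qed
    define X where "X = (\<Sum>\<^sub>\<infinity>x\<in>UNIV - {b}. ennreal (\<nu> x))"
    define Y where "Y = (\<Sum>\<^sub>\<infinity>x\<in>UNIV - {b}. ennreal (col \<pi> x))"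
    have YX: "Y \<le> X" unfolding X_def Y_def by (rule infsum_mono) (use colle \<nu>nn in auto)
    have "X \<le> (\<Sum>\<^sub>\<infinity>b\<in>UNIV. ennreal (\<nu> b))" unfolding X_def
      by (rule infsum_mono_neutral) auto
    then have Xfin: "X \<noteq> \<infinity>" using fin tot by auto
    have "X + ennreal (\<nu> b) = Y + ennreal (col \<pi> b)"
      using colfin split[of "\<lambda>x. ennreal (\<nu> x)"] split[of "\<lambda>x. ennreal (col \<pi> x)"]
      by (simp add: X_def Y_def)
    also have "\<dots> \<le> X + ennreal (col \<pi> b)" using YX by (simp add: add_right_mono)
    finally have "ennreal (\<nu> b) \<le> ennreal (col \<pi> b)"
      using Xfin by (simp add: ennreal_add_left_cancel_le)
    then have "\<nu> b \<le> col \<pi> b" using colnn by simp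
    then show ?thesis using colle[of b] by simp
  qed
  show ?thesis
    using nn zE rowall coleq by (auto simp: row_def col_def)
qed



lemma paths_snoc:
  assumes "1 \<le> n" "length p = n"
  shows "p @ [u] \<in> paths E (Suc n) \<longleftrightarrow> p \<in> paths E n \<and> (p!(n-1), u) \<in> E"
proof
  assume H: "p @ [u] \<in> paths E (Suc n)"
  have H': "((p@[u])!i, (p@[u])!Suc i) \<in> E" if "Suc i < Suc n" for i
    using H that by (simp add: paths_def)
  have "(p!i, p!Suc i) \<in> E" if "Suc i < n" for i
    using H'[of i] that assms(2) by (simp add: nth_append)
  moreover have "(p!(n-1), u) \<in> E"
    using H'[of "n-1"] assms by (simp add: nth_append)
  ultimately show "p \<in> paths E n \<and> (p!(n-1), u) \<in> E" using assms by (simp add: paths_def)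
next
  assume H: "p \<in> paths E n \<and> (p!(n-1), u) \<in> E"
  have "((p@[u])!i, (p@[u])!Suc i) \<in> E" if "Suc i < Suc n" for i
  proof (cases "Suc i < n")
    case True
    then show ?thesis using H assms(2) by (simp add: nth_append paths_def)
  next
    case False
    then have "i = n - 1" using that by simp
    then show ?thesis using H assms by (simp add: nth_append)
  qed
  then show "p @ [u] \<in> paths E (Suc n)" using assms(2) by (simp add: paths_def)
qed

lemma paths_decomp:
  assumes "1 \<le> n" "q \<in> paths E (Suc n)"
  shows "q = butlast q @ [q!n]" "butlast q \<in> paths E n" "((butlast q)!(n-1), q!n) \<in> E"
proof -
  have len: "length q = Suc n" using assms(2) by (simp add: paths_def)
  then have "q \<noteq> []" by auto
  then have q: "q = butlast q @ [last q]" by simp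
  have "last q = q!n" using len \<open>q \<noteq> []\<close> by (simp add: last_conv_nth)
  then show q': "q = butlast q @ [q!n]" using q by simp
  have lb: "length (butlast q) = n" using len by simp
  from assms(2) q' have "butlast q @ [q!n] \<in> paths E (Suc n)" by simp
  then show "butlast q \<in> paths E n" "((butlast q)!(n-1), q!n) \<in> E"
    using paths_snoc[OF assms(1) lb] by auto
qed

lemma paths_length: "p \<in> paths E n \<Longrightarrow> length p = n" by (simp add: paths_def)

lemma glue:
  fixes E :: "('v \<times> 'v) set" and w :: "nat \<Rightarrow> 'v \<Rightarrow> real" and \<pi> :: "nat \<Rightarrow> 'v \<times> 'v \<Rightarrow> real"
  assumes fo: "\<And>a. finite {b. (a,b) \<in> E}" and fi: "\<And>b. finite {a. (a,b) \<in> E}"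
    and w1: "\<forall>v. 0 \<le> w 1 v"
    and \<pi>: "\<forall>i\<in>{1..<N}. (\<forall>e. 0 \<le> \<pi> i e) \<and> (\<forall>e. e \<notin> E \<longrightarrow> \<pi> i e = 0) \<and>
        (\<forall>a. (\<Sum>b\<in>{b. (a,b) \<in> E}. \<pi> i (a,b)) = w i a) \<and> (\<forall>b. (\<Sum>a\<in>{a. (a,b) \<in> E}. \<pi> i (a,b)) = w (Suc i) b)"
  shows "1 \<le> n \<Longrightarrow> n \<le> N \<Longrightarrow> \<exists>\<alpha>. (\<forall>p. 0 \<le> \<alpha> p) \<and> (\<forall>j<n. \<forall>v. finite {p\<in>paths E n. p!j = v} \<and>
            (\<Sum>p\<in>{p\<in>paths E n. p!j = v}. \<alpha> p) = w (Suc j) v)"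
proof (induction n rule: nat_induct_at_least)
  case base
  have eq: "{p\<in>paths E 1. p!0 = v} = {[v]}" for v
  proof
    show "{p\<in>paths E 1. p!0 = v} \<subseteq> {[v]}"
    proof
      fix p assume "p \<in> {p\<in>paths E 1. p!0 = v}"
      then have "length p = 1" "p!0 = v" by (auto simp: paths_def)
      then show "p \<in> {[v]}" by (cases p) auto
    qed
    show "{[v]} \<subseteq> {p\<in>paths E 1. p!0 = v}" by (simp add: paths_def)
  qed
  show ?case
    by (intro exI[of _ "\<lambda>p. w 1 (hd p)"] conjI allI impI) (use w1 eq in auto)
next
  case (Suc n)
  then have n1: "1 \<le> n" and nN: "n < N" by auto
  then obtain \<alpha> where \<alpha>nn: "\<forall>p. 0 \<le> \<alpha> p" and
    \<alpha>: "\<forall>j<n. \<forall>v. finite {p\<in>paths E n. p!j = v} \<and> (\<Sum>p\<in>{p\<in>paths E n. p!j = v}. \<alpha> p) = w (Suc j) v"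
    using Suc.IH by auto
  have nI: "n \<in> {1..<N}" using n1 nN by simp
  have \<pi>nn: "\<And>x y. 0 \<le> \<pi> n (x,y)" using \<pi> nI by blast
  have \<pi>z: "\<And>x y. (x,y) \<notin> E \<Longrightarrow> \<pi> n (x,y) = 0" using \<pi> nI by blast
  have row: "\<And>a. (\<Sum>b\<in>{b. (a,b) \<in> E}. \<pi> n (a,b)) = w n a" using \<pi> nI by blast
  have col: "\<And>b. (\<Sum>a\<in>{a. (a,b) \<in> E}. \<pi> n (a,b)) = w (Suc n) b" using \<pi> nI by blast
  have wnn: "0 \<le> w n a" for a using row[of a] \<pi>nn by (metis sum_nonneg)
  have n1': "Suc (n - 1) = n" "n - 1 < n" using n1 by auto
  have \<alpha>last: "(\<Sum>p\<in>{p\<in>paths E n. p!(n-1) = x}. \<alpha> p) = w n x" "finite {p\<in>paths E n. p!(n-1) = x}" for x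
    using \<alpha> n1' by metis+
  have \<alpha>zero: "\<alpha> p = 0" if "p \<in> paths E n" "w n (p!(n-1)) = 0" for p
  proof -
    have "(\<Sum>p\<in>{p'\<in>paths E n. p'!(n-1) = p!(n-1)}. \<alpha> p) = 0" using \<alpha>last(1) that(2) by simp
    then have "\<forall>p'\<in>{p'\<in>paths E n. p'!(n-1) = p!(n-1)}. \<alpha> p' = 0"
      using sum_nonneg_eq_0_iff[OF \<alpha>last(2)] \<alpha>nn by blast
    then show ?thesis using that(1) by blast
  qed
  define \<alpha>' where "\<alpha>' q = \<alpha> (butlast q) * \<pi> n ((butlast q)!(n-1), q!n) / w n ((butlast q)!(n-1))" for q
  have \<alpha>'snoc: "\<alpha>' (p @ [u]) = \<alpha> p * \<pi> n (p!(n-1), u) / w n (p!(n-1))" if "length p = n" for p u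
    using that by (simp add: \<alpha>'_def nth_append)
  have \<alpha>'nn: "0 \<le> \<alpha>' q" for q
    unfolding \<alpha>'_def using \<alpha>nn \<pi>nn wnn by (intro divide_nonneg_nonneg mult_nonneg_nonneg) auto
  have old: "finite {q\<in>paths E (Suc n). q!j = v} \<and> (\<Sum>q\<in>{q\<in>paths E (Suc n). q!j = v}. \<alpha>' q) = w (Suc j) v"
    if j: "j < n" for j v
  proof -
    define P where "P = {p\<in>paths E n. p!j = v}"
    define B where "B p = {u. (p!(n-1), u) \<in> E}" for p :: "'v list"
    have Qeq: "{q\<in>paths E (Suc n). q!j = v} = (\<lambda>(p,u). p @ [u]) ` (SIGMA p:P. B p)"
    proof
      show "{q\<in>paths E (Suc n). q!j = v} \<subseteq> (\<lambda>(p,u). p @ [u]) ` (SIGMA p:P. B p)"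
      proof
        fix q assume q: "q \<in> {q\<in>paths E (Suc n). q!j = v}"
        then have qp: "q \<in> paths E (Suc n)" and qj: "q!j = v" by auto
        note d = paths_decomp[OF n1 qp]
        have "length (butlast q) = n" using paths_length[OF d(2)] .
        then have "(butlast q)!j = v" using qj j by (simp add: nth_butlast)
        then have "(butlast q, q!n) \<in> (SIGMA p:P. B p)" using d by (simp add: P_def B_def)
        then show "q \<in> (\<lambda>(p,u). p @ [u]) ` (SIGMA p:P. B p)" using d(1) by (auto intro: image_eqI[of _ _ "(butlast q, q!n)"])
      qed
      show "(\<lambda>(p,u). p @ [u]) ` (SIGMA p:P. B p) \<subseteq> {q\<in>paths E (Suc n). q!j = v}"
      proof
        fix q assume "q \<in> (\<lambda>(p,u). p @ [u]) ` (SIGMA p:P. B p)"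
        then obtain p u where q: "q = p @ [u]" and "p \<in> P" "u \<in> B p" by auto
        then have pp: "p \<in> paths E n" "p!j = v" "(p!(n-1), u) \<in> E" by (auto simp: P_def B_def)
        have lp: "length p = n" using paths_length[OF pp(1)] .
        have "p @ [u] \<in> paths E (Suc n)" using paths_snoc[OF n1 lp] pp by simp
        moreover have "(p @ [u])!j = v" using lp j pp by (simp add: nth_append)
        ultimately show "q \<in> {q\<in>paths E (Suc n). q!j = v}" using q by simp
      qed
    qed
    have finP: "finite P" using \<alpha> j by (simp add: P_def)
    have finB: "\<And>p. finite (B p)" using fo by (simp add: B_def)
    have finS: "finite (SIGMA p:P. B p)" using finP finB by (intro finite_SigmaI) auto
    have inj: "inj_on (\<lambda>(p,u). p @ [u]) (SIGMA p:P. B p)"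
      by (auto simp: inj_on_def)
    have "(\<Sum>q\<in>{q\<in>paths E (Suc n). q!j = v}. \<alpha>' q) = (\<Sum>(p,u)\<in>(SIGMA p:P. B p). \<alpha>' (p @ [u]))"
      unfolding Qeq by (subst sum.reindex[OF inj]) (simp add: case_prod_unfold)
    also have "\<dots> = (\<Sum>p\<in>P. \<Sum>u\<in>B p. \<alpha>' (p @ [u]))"
      by (rule sum.Sigma[symmetric]) (use finP finB in auto)
    also have "\<dots> = (\<Sum>p\<in>P. \<alpha> p)"
    proof (rule sum.cong[OF refl])
      fix p assume pP: "p \<in> P"
      then have pp: "p \<in> paths E n" by (simp add: P_def)
      have lp: "length p = n" using paths_length[OF pp] .
      have "(\<Sum>u\<in>B p. \<alpha>' (p @ [u])) = (\<Sum>u\<in>B p. \<alpha> p * \<pi> n (p!(n-1), u) / w n (p!(n-1)))"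
        using \<alpha>'snoc[OF lp] by simp
      also have "\<dots> = \<alpha> p * (\<Sum>u\<in>B p. \<pi> n (p!(n-1), u)) / w n (p!(n-1))"
        by (simp add: sum_distrib_left sum_divide_distrib)
      also have "\<dots> = \<alpha> p * w n (p!(n-1)) / w n (p!(n-1))" using row by (simp add: B_def)
      also have "\<dots> = \<alpha> p" using \<alpha>zero[OF pp] by (cases "w n (p!(n-1)) = 0") auto
      finally show "(\<Sum>u\<in>B p. \<alpha>' (p @ [u])) = \<alpha> p" .
    qed
    also have "\<dots> = w (Suc j) v" using \<alpha> j by (simp add: P_def)
    finally show ?thesis using finS Qeq by simp
  qed
  have new: "finite {q\<in>paths E (Suc n). q!n = v} \<and> (\<Sum>q\<in>{q\<in>paths E (Suc n). q!n = v}. \<alpha>' q) = w (Suc n) v"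
    for v
  proof -
    define X where "X = {x. (x, v) \<in> E}"
    define P where "P x = {p\<in>paths E n. p!(n-1) = x}" for x
    have Qeq: "{q\<in>paths E (Suc n). q!n = v} = (\<lambda>(x,p). p @ [v]) ` (SIGMA x:X. P x)"
    proof
      show "{q\<in>paths E (Suc n). q!n = v} \<subseteq> (\<lambda>(x,p). p @ [v]) ` (SIGMA x:X. P x)"
      proof
        fix q assume q: "q \<in> {q\<in>paths E (Suc n). q!n = v}"
        then have qp: "q \<in> paths E (Suc n)" and qn: "q!n = v" by auto
        note d = paths_decomp[OF n1 qp]
        have "((butlast q)!(n-1), butlast q) \<in> (SIGMA x:X. P x)" using d qn by (simp add: P_def X_def)
        then show "q \<in> (\<lambda>(x,p). p @ [v]) ` (SIGMA x:X. P x)" using d(1) qn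
          by (auto intro: image_eqI[of _ _ "((butlast q)!(n-1), butlast q)"])
      qed
      show "(\<lambda>(x,p). p @ [v]) ` (SIGMA x:X. P x) \<subseteq> {q\<in>paths E (Suc n). q!n = v}"
      proof
        fix q assume "q \<in> (\<lambda>(x,p). p @ [v]) ` (SIGMA x:X. P x)"
        then obtain x p where q: "q = p @ [v]" and "x \<in> X" "p \<in> P x" by auto
        then have pp: "p \<in> paths E n" "p!(n-1) = x" "(x, v) \<in> E" by (auto simp: P_def X_def)
        have lp: "length p = n" using paths_length[OF pp(1)] .
        have "p @ [v] \<in> paths E (Suc n)" using paths_snoc[OF n1 lp] pp by simp
        moreover have "(p @ [v])!n = v" using lp by (simp add: nth_append)
        ultimately show "q \<in> {q\<in>paths E (Suc n). q!n = v}" using q by simp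
      qed
    qed
    have finX: "finite X" using fi by (simp add: X_def)
    have finP: "\<And>x. finite (P x)" using \<alpha>last(2) by (simp add: P_def)
    have finS: "finite (SIGMA x:X. P x)" using finX finP by (intro finite_SigmaI) auto
    have inj: "inj_on (\<lambda>(x,p). p @ [v]) (SIGMA x:X. P x)"
      by (auto simp: inj_on_def P_def)
    have "(\<Sum>q\<in>{q\<in>paths E (Suc n). q!n = v}. \<alpha>' q) = (\<Sum>(x,p)\<in>(SIGMA x:X. P x). \<alpha>' (p @ [v]))"
      unfolding Qeq by (subst sum.reindex[OF inj]) (simp add: case_prod_unfold)
    also have "\<dots> = (\<Sum>x\<in>X. \<Sum>p\<in>P x. \<alpha>' (p @ [v]))"
      by (rule sum.Sigma[symmetric]) (use finX finP in auto)
    also have "\<dots> = (\<Sum>x\<in>X. \<pi> n (x, v))"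
    proof (rule sum.cong[OF refl])
      fix x assume xX: "x \<in> X"
      have "(\<Sum>p\<in>P x. \<alpha>' (p @ [v])) = (\<Sum>p\<in>P x. \<alpha> p * \<pi> n (x, v) / w n x)"
        by (rule sum.cong[OF refl]) (auto simp: P_def \<alpha>'snoc paths_length)
      also have "\<dots> = (\<Sum>p\<in>P x. \<alpha> p) * \<pi> n (x, v) / w n x"
        by (simp add: sum_distrib_right sum_divide_distrib)
      also have "\<dots> = w n x * \<pi> n (x, v) / w n x" using \<alpha>last(1) by (simp add: P_def)
      also have "\<dots> = \<pi> n (x, v)"
      proof (cases "w n x = 0")
        case True
        have "\<pi> n (x, v) \<le> (\<Sum>b\<in>{b. (x,b) \<in> E}. \<pi> n (x,b))"
          by (rule member_le_sum) (use xX fo \<pi>nn in \<open>auto simp: X_def\<close>)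
        then have "\<pi> n (x, v) = 0" using True row[of x] \<pi>nn[of x v] by simp
        then show ?thesis by simp
      qed simp
      finally show "(\<Sum>p\<in>P x. \<alpha>' (p @ [v])) = \<pi> n (x, v)" .
    qed
    also have "\<dots> = w (Suc n) v" using col by (simp add: X_def)
    finally show ?thesis using finS Qeq by simp
  qed
  show ?case
  proof (intro exI[of _ \<alpha>'] conjI allI impI)
    fix p show "0 \<le> \<alpha>' p" by (rule \<alpha>'nn)
  next
    fix j v assume "j < Suc n"
    then consider "j < n" | "j = n" by linarith
    then show "finite {p\<in>paths E (Suc n). p!j = v}" using old new by cases auto
  next
    fix j v assume "j < Suc n"
    then consider "j < n" | "j = n" by linarith
    then show "(\<Sum>p\<in>{p\<in>paths E (Suc n). p!j = v}. \<alpha>' p) = w (Suc j) v" using old new by cases auto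
  qed
qed


theorem proposition2p1:
  fixes E :: "('v \<times> 'v) set" and N :: nat and w :: "nat \<Rightarrow> 'v \<Rightarrow> real"
  assumes "bounded_degree E"
    and "N \<ge> 2"
    and "\<forall>i\<in>{1..N}. \<forall>v. w i v \<ge> 0"
    and "\<forall>A i. 1 \<le> i \<and> i < N \<longrightarrow>
           (\<Sum>\<^sub>\<infinity>a\<in>A. ennreal (w i a)) \<le> (\<Sum>\<^sub>\<infinity>b\<in>out_nbhd E A. ennreal (w (Suc i) b))"
    and "(\<Sum>\<^sub>\<infinity>v\<in>UNIV. ennreal (w 1 v)) = (\<Sum>\<^sub>\<infinity>v\<in>UNIV. ennreal (w N v))"
    and "(\<Sum>\<^sub>\<infinity>v\<in>UNIV. ennreal (w 1 v)) < \<infinity>"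
  shows "\<exists>\<alpha> :: 'v list \<Rightarrow> real. (\<forall>p\<in>paths E N. \<alpha> p \<ge> 0) \<and>
           (\<forall>i\<in>{1..N}. \<forall>v. ennreal (w i v) =
              (\<Sum>\<^sub>\<infinity>p\<in>{p\<in>paths E N. p ! (i - 1) = v}. ennreal (\<alpha> p)))"
proof -
  from assms(1) obtain d :: nat where deg: "\<forall>v. finite {u. (v, u) \<in> E} \<and> card {u. (v, u) \<in> E} \<le> d \<and>
     finite {u. (u, v) \<in> E} \<and> card {u. (u, v) \<in> E} \<le> d"
    unfolding bounded_degree_def by blast
  have fo: "\<And>a. finite {b. (a,b) \<in> E}" using deg by blast
  have fi: "\<And>b. finite {a. (a,b) \<in> E}" using deg by blast
  define S where "S i = (\<Sum>\<^sub>\<infinity>v\<in>UNIV. ennreal (w i v))" for i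
  have mono: "S i \<le> S (Suc i)" if "1 \<le> i" "i < N" for i
  proof -
    have "S i \<le> (\<Sum>\<^sub>\<infinity>b\<in>out_nbhd E UNIV. ennreal (w (Suc i) b))"
      using assms(4) that unfolding S_def by blast
    also have "\<dots> \<le> S (Suc i)" unfolding S_def by (rule infsum_mono_neutral) auto
    finally show ?thesis .
  qed
  have up: "S i \<le> S (i + k)" if "1 \<le> i" "i + k \<le> N" for i k
    using that
  proof (induction k)
    case 0 show ?case by simp
  next
    case (Suc k)
    then have "S i \<le> S (i + k)" by simp
    also have "\<dots> \<le> S (Suc (i + k))" using mono Suc.prems by simp
    finally show ?case by simp
  qed
  have Seq: "S i = S 1" if "1 \<le> i" "i \<le> N" for i
  proof -
    have "S 1 \<le> S i" using up[of 1 "i - 1"] that by simp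
    moreover have "S i \<le> S N" using up[of i "N - i"] that by simp
    moreover have "S 1 = S N" using assms(5) by (simp add: S_def)
    ultimately show ?thesis by (simp add: order_antisym)
  qed
  have coup: "\<forall>i\<in>{1..<N}. \<exists>\<pi>. (\<forall>e. 0 \<le> \<pi> e) \<and> (\<forall>e. e \<notin> E \<longrightarrow> \<pi> e = 0) \<and>
        (\<forall>a. (\<Sum>b\<in>{b. (a,b) \<in> E}. \<pi> (a,b)) = w i a) \<and> (\<forall>b. (\<Sum>a\<in>{a. (a,b) \<in> E}. \<pi> (a,b)) = w (Suc i) b)"
  proof
    fix i assume i: "i \<in> {1..<N}"
    have h1: "\<forall>a. 0 \<le> w i a" using assms(3) i by auto
    have h2: "\<forall>b. 0 \<le> w (Suc i) b" using assms(3) i by auto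
    have h3: "\<forall>A. (\<Sum>\<^sub>\<infinity>a\<in>A. ennreal (w i a)) \<le> (\<Sum>\<^sub>\<infinity>b\<in>out_nbhd E A. ennreal (w (Suc i) b))"
      using assms(4) i by auto
    have h4: "(\<Sum>\<^sub>\<infinity>a\<in>UNIV. ennreal (w i a)) = (\<Sum>\<^sub>\<infinity>b\<in>UNIV. ennreal (w (Suc i) b))"
      using Seq[of i] Seq[of "Suc i"] i unfolding S_def by auto
    have h5: "(\<Sum>\<^sub>\<infinity>a\<in>UNIV. ennreal (w i a)) < \<infinity>"
      using Seq[of i] i assms(6) unfolding S_def by auto
    show "\<exists>\<pi>. (\<forall>e. 0 \<le> \<pi> e) \<and> (\<forall>e. e \<notin> E \<longrightarrow> \<pi> e = 0) \<and>
        (\<forall>a. (\<Sum>b\<in>{b. (a,b) \<in> E}. \<pi> (a,b)) = w i a) \<and> (\<forall>b. (\<Sum>a\<in>{a. (a,b) \<in> E}. \<pi> (a,b)) = w (Suc i) b)"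
      by (rule coupling[OF fo fi h1 h2 h3 h4 h5])
  qed
  obtain \<pi> where \<pi>: "\<forall>i\<in>{1..<N}. (\<forall>e. 0 \<le> \<pi> i e) \<and> (\<forall>e. e \<notin> E \<longrightarrow> \<pi> i e = 0) \<and>
        (\<forall>a. (\<Sum>b\<in>{b. (a,b) \<in> E}. \<pi> i (a,b)) = w i a) \<and> (\<forall>b. (\<Sum>a\<in>{a. (a,b) \<in> E}. \<pi> i (a,b)) = w (Suc i) b)"
    using bchoice[OF coup] by blast
  have w1: "\<forall>v. 0 \<le> w 1 v" using assms(2,3) by auto
  obtain \<alpha> where \<alpha>nn: "\<forall>p. 0 \<le> \<alpha> p" and
    \<alpha>: "\<forall>j<N. \<forall>v. finite {p\<in>paths E N. p!j = v} \<and> (\<Sum>p\<in>{p\<in>paths E N. p!j = v}. \<alpha> p) = w (Suc j) v"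
    using glue[OF fo fi w1 \<pi>, of N] assms(2) by auto
  show ?thesis
  proof (intro exI[of _ \<alpha>] conjI ballI allI)
    fix p show "0 \<le> \<alpha> p" using \<alpha>nn by blast
  next
    fix i v assume i: "i \<in> {1..N}"
    then have j: "i - 1 < N" "Suc (i - 1) = i" by auto
    have fin: "finite {p\<in>paths E N. p!(i-1) = v}" using \<alpha> j by blast
    have s: "(\<Sum>p\<in>{p\<in>paths E N. p!(i-1) = v}. \<alpha> p) = w i v" using \<alpha> j by metis
    have "(\<Sum>\<^sub>\<infinity>p\<in>{p\<in>paths E N. p!(i-1) = v}. ennreal (\<alpha> p)) = (\<Sum>p\<in>{p\<in>paths E N. p!(i-1) = v}. ennreal (\<alpha> p))"
      using fin by simp
    also have "\<dots> = ennreal (\<Sum>p\<in>{p\<in>paths E N. p!(i-1) = v}. \<alpha> p)" using \<alpha>nn by simp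
    finally show "ennreal (w i v) = (\<Sum>\<^sub>\<infinity>p\<in>{p\<in>paths E N. p!(i-1) = v}. ennreal (\<alpha> p))" using s by simp
  qed
qed

end
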